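(* Let $A$ be a meet-complemented lattice in which $\Box x$ and $\Diamond x$ exist for every $x\in A$, and let $\{a_i: i\in I\}$ be an arbitrary subset of $A$. Then (i) if both $\bigwedge_{i\in I}a_i$ and $\bigwedge_{i\in I}\Box a_i$ exist, then $\bigwedge_{i\in I}\Box a_i=\Box\bigwedge_{i\in I}a_i$; and (ii) if both $\bigvee_{i\in I}a_i$ and $\bigvee_{i\in I}\Diamond a_i$ exist, then $\bigvee_{i\in I}\Diamond a_i=\Diamond\bigvee_{i\in I}a_i$.
   Context: A meet-complemented lattice is a lattice $(L,\le)$ (not necessarily distributive) such that for every $a\in L$ the element $\neg a=\max\{b\in L: a\wedge b\le c\ \text{for all } c\in L\}$ exists; it is bounded with bottom $0$ and top $1$. For $a\in L$, $\Box a=\max\{b\in L: a\vee\neg b=1\}$ and $\Diamond a=\min\{b\in L: \neg a\vee b=1\}$. *)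

theory Defs
  imports Main
begin

definition is_max :: "'a::order set \<Rightarrow> 'a \<Rightarrow> bool" where
  "is_max S m \<longleftrightarrow> m \<in> S \<and> (\<forall>b\<in>S. b \<le> m)"

definition is_min :: "'a::order set \<Rightarrow> 'a \<Rightarrow> bool" where
  "is_min S m \<longleftrightarrow> m \<in> S \<and> (\<forall>b\<in>S. m \<le> b)"

definition is_glb :: "'a::order set \<Rightarrow> 'a \<Rightarrow> bool" where
  "is_glb S m \<longleftrightarrow> (\<forall>x\<in>S. m \<le> x) \<and> (\<forall>y. (\<forall>x\<in>S. y \<le> x) \<longrightarrow> y \<le> m)"

definition is_lub :: "'a::order set \<Rightarrow> 'a \<Rightarrow> bool" where
  "is_lub S m \<longleftrightarrow> (\<forall>x\<in>S. x \<le> m) \<and> (\<forall>y. (\<forall>x\<in>S. x \<le> y) \<longrightarrow> m \<le> y)"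

definition neg_set :: "'a::bounded_lattice \<Rightarrow> 'a set" where
  "neg_set a = {b. \<forall>c. inf a b \<le> c}"

definition neg_exists :: "'a::bounded_lattice \<Rightarrow> bool" where
  "neg_exists a \<longleftrightarrow> (\<exists>m. is_max (neg_set a) m)"

definition neg :: "'a::bounded_lattice \<Rightarrow> 'a" where
  "neg a = (THE m. is_max (neg_set a) m)"

definition box_set :: "'a::bounded_lattice \<Rightarrow> 'a set" where
  "box_set a = {b. sup a (neg b) = top}"

definition box_exists :: "'a::bounded_lattice \<Rightarrow> bool" where
  "box_exists a \<longleftrightarrow> (\<exists>m. is_max (box_set a) m)"

definition box :: "'a::bounded_lattice \<Rightarrow> 'a" where
  "box a = (THE m. is_max (box_set a) m)"

definition dia_set :: "'a::bounded_lattice \<Rightarrow> 'a set" where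
  "dia_set a = {b. sup (neg a) b = top}"

definition dia_exists :: "'a::bounded_lattice \<Rightarrow> bool" where
  "dia_exists a \<longleftrightarrow> (\<exists>m. is_min (dia_set a) m)"

definition dia :: "'a::bounded_lattice \<Rightarrow> 'a" where
  "dia a = (THE m. is_min (dia_set a) m)"

end

theory Submission
  imports Defs
begin

lemma max_the:
  fixes S :: "'a::order set"
  assumes "\<exists>m. is_max S m" shows "is_max S (THE m. is_max S m)"
proof -
  obtain m where m: "is_max S m" using assms by blast
  have "\<And>k. is_max S k \<Longrightarrow> k = m" using m unfolding is_max_def by (meson antisym)
  then show ?thesis using m theI[where P="is_max S"] by blast
qed

lemma min_the:
  fixes S :: "'a::order set"
  assumes "\<exists>m. is_min S m" shows "is_min S (THE m. is_min S m)"
proof -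
  obtain m where m: "is_min S m" using assms by blast
  have "\<And>k. is_min S k \<Longrightarrow> k = m" using m unfolding is_min_def by (meson antisym)
  then show ?thesis using m theI[where P="is_min S"] by blast
qed

lemma neg_anti:
  fixes b c :: "'a::bounded_lattice"
  assumes ne: "\<forall>x::'a. neg_exists x" and bc: "b \<le> c"
  shows "neg c \<le> neg b"
proof -
  have mc: "is_max (neg_set c) (neg c)" using ne max_the unfolding neg_exists_def neg_def by blast
  have mb: "is_max (neg_set b) (neg b)" using ne max_the unfolding neg_exists_def neg_def by blast
  have "\<forall>d. inf c (neg c) \<le> d" using mc unfolding is_max_def neg_set_def by simp
  moreover have "inf b (neg c) \<le> inf c (neg c)" using bc by (simp add: le_infI1)
  ultimately have "neg c \<in> neg_set b" unfolding neg_set_def using order_trans by blast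
  then show ?thesis using mb unfolding is_max_def by blast
qed

lemma box_iff:
  fixes a b :: "'a::bounded_lattice"
  assumes ne: "\<forall>x::'a. neg_exists x" and be: "\<forall>x::'a. box_exists x"
  shows "b \<le> box a \<longleftrightarrow> sup a (neg b) = top"
proof -
  have m: "is_max (box_set a) (box a)" using be max_the unfolding box_exists_def box_def by blast
  show ?thesis
  proof
    assume "b \<le> box a"
    then have "neg (box a) \<le> neg b" using neg_anti ne by blast
    moreover have "sup a (neg (box a)) = top" using m unfolding is_max_def box_set_def by simp
    ultimately show "sup a (neg b) = top"
      by (metis sup.mono order_refl top.extremum_uniqueI)
  next
    assume "sup a (neg b) = top"
    then show "b \<le> box a" using m unfolding is_max_def box_set_def by simp
  qed
qed

lemma dia_iff:
  fixes b c :: "'a::bounded_lattice"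
  assumes de: "\<forall>x::'a. dia_exists x"
  shows "dia b \<le> c \<longleftrightarrow> sup (neg b) c = top"
proof -
  have m: "is_min (dia_set b) (dia b)" using de min_the unfolding dia_exists_def dia_def by blast
  show ?thesis
  proof
    assume "dia b \<le> c"
    moreover have "sup (neg b) (dia b) = top" using m unfolding is_min_def dia_set_def by simp
    ultimately show "sup (neg b) c = top"
      by (metis sup.mono order_refl top.extremum_uniqueI)
  next
    assume "sup (neg b) c = top"
    then show "dia b \<le> c" using m unfolding is_min_def dia_set_def by simp
  qed
qed

lemma galois:
  fixes a b :: "'a::bounded_lattice"
  assumes ne: "\<forall>x::'a. neg_exists x" and be: "\<forall>x::'a. box_exists x" and de: "\<forall>x::'a. dia_exists x"
  shows "b \<le> box a \<longleftrightarrow> dia b \<le> a"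
  using box_iff[OF ne be] dia_iff[OF de] by (simp add: sup_commute)

theorem proposition10:
  fixes a :: "'i \<Rightarrow> 'a::bounded_lattice" and I :: "'i set"
  assumes meet_complemented: "\<forall>x::'a. neg_exists x"
    and box_ex: "\<forall>x::'a. box_exists x"
    and dia_ex: "\<forall>x::'a. dia_exists x"
  shows "(\<forall>m n. is_glb (a ` I) m \<and> is_glb ((\<lambda>i. box (a i)) ` I) n \<longrightarrow> n = box m)
       \<and> (\<forall>m n. is_lub (a ` I) m \<and> is_lub ((\<lambda>i. dia (a i)) ` I) n \<longrightarrow> n = dia m)"
proof -
  note G = galois[OF meet_complemented box_ex dia_ex]
  have "n = box m" if m: "is_glb (a ` I) m" and n: "is_glb ((\<lambda>i. box (a i)) ` I) n" for m n
  proof (rule antisym)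
    have "\<forall>i\<in>I. dia n \<le> a i" using n G unfolding is_glb_def by auto
    then have "dia n \<le> m" using m unfolding is_glb_def by auto
    then show "n \<le> box m" using G by blast
  next
    have "dia (box m) \<le> m" using G by blast
    then have "\<forall>i\<in>I. dia (box m) \<le> a i" using m unfolding is_glb_def using order_trans by blast
    then have "\<forall>i\<in>I. box m \<le> box (a i)" using G by blast
    then show "box m \<le> n" using n unfolding is_glb_def by auto
  qed
  moreover have "n = dia m" if m: "is_lub (a ` I) m" and n: "is_lub ((\<lambda>i. dia (a i)) ` I) n" for m n
  proof (rule antisym)
    have "\<forall>i\<in>I. a i \<le> box n" using n G unfolding is_lub_def by auto
    then have "m \<le> box n" using m unfolding is_lub_def by auto
    then show "dia m \<le> n" using G by blast
  next
    have "m \<le> box (dia m)" using G by blast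
    then have "\<forall>i\<in>I. a i \<le> box (dia m)" using m unfolding is_lub_def using order_trans by blast
    then have "\<forall>i\<in>I. dia (a i) \<le> dia m" using G by blast
    then show "n \<le> dia m" using n unfolding is_lub_def by auto
  qed
  ultimately show ?thesis by blast
qed

end
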